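(* Let $\mathcal{X}$ be a finite set and $\underline{Q}$ a lower transition rate operator on $\mathcal{L}(\mathcal{X})$. Then for all $A\subseteq\mathcal{X}$, all $x\in\mathcal{X}$ and all $t,s>0$: (1) if $x\in A$ then $\underline{T}_t\mathbb{I}_A(x)>0$; and $\underline{T}_t\mathbb{I}_A(x)>0\iff\underline{T}_s\mathbb{I}_A(x)>0$; (2) if $x\notin A$ then $\underline{T}_t\mathbb{I}_A(x)<1$; and $\underline{T}_t\mathbb{I}_A(x)<1\iff\underline{T}_s\mathbb{I}_A(x)<1$; (3) if $x\in A$ then $\overline{T}_t\mathbb{I}_A(x)>0$; and $\overline{T}_t\mathbb{I}_A(x)>0\iff\overline{T}_s\mathbb{I}_A(x)>0$; (4) if $x\notin A$ then $\overline{T}_t\mathbb{I}_A(x)<1$; and $\overline{T}_t\mathbb{I}_A(x)<1\iff\overline{T}_s\mathbb{I}_A(x)<1$.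
   Context: $\mathcal{L}(\mathcal{X})$ is the set of real-valued functions on $\mathcal{X}$ with pointwise operations and order, real constants identified with constant functions, $\mathbb{I}_A$ the indicator of $A$, $\mathbb{I}_y\coloneqq\mathbb{I}_{\{y\}}$. A lower transition rate operator is a map $\underline{Q}\colon\mathcal{L}(\mathcal{X})\to\mathcal{L}(\mathcal{X})$ such that for all $f,g$, $\lambda\ge0$, $\mu\in\mathbb{R}$, $x,y\in\mathcal{X}$: $\underline{Q}(\mu)=0$; $\underline{Q}(f+g)\ge\underline{Q}f+\underline{Q}g$; $\underline{Q}(\lambda f)=\lambda\underline{Q}f$; $x\ne y\Rightarrow\underline{Q}(\mathbb{I}_y)(x)\ge0$. For each $f$, $t\mapsto\underline{T}_tf$ is the unique solution on $[0,\infty)$ of $\frac{d}{dt}\underline{T}_tf=\underline{Q}\,\underline{T}_tf$ with $\underline{T}_0f=f$ (existence and uniqueness are known), and $\overline{T}_tf\coloneqq-\underline{T}_t(-f)$. *)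

theory Defs
  imports "HOL-Analysis.Analysis"
begin

definition lower_rate_op :: "(('x \<Rightarrow> real) \<Rightarrow> ('x \<Rightarrow> real)) \<Rightarrow> bool" where
  "lower_rate_op Q \<longleftrightarrow>
     (\<forall>\<mu>::real. Q (\<lambda>_. \<mu>) = (\<lambda>_. 0)) \<and>
     (\<forall>f g. \<forall>x. Q (\<lambda>y. f y + g y) x \<ge> Q f x + Q g x) \<and>
     (\<forall>f. \<forall>l::real. l \<ge> 0 \<longrightarrow> Q (\<lambda>y. l * f y) = (\<lambda>y. l * Q f y)) \<and>
     (\<forall>x y. x \<noteq> y \<longrightarrow> Q (indicator {y}) x \<ge> 0)"

text \<open>T is the family of solutions of d/dt T_t f = Q (T_t f), T_0 f = f, on [0,\<infinity>)
  (componentwise derivative; X finite so this is the derivative in L(X)).\<close>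
definition lower_semigroup_of ::
  "(('x \<Rightarrow> real) \<Rightarrow> ('x \<Rightarrow> real)) \<Rightarrow> (real \<Rightarrow> ('x \<Rightarrow> real) \<Rightarrow> ('x \<Rightarrow> real)) \<Rightarrow> bool" where
  "lower_semigroup_of Q T \<longleftrightarrow>
     (\<forall>f. T 0 f = f \<and>
        (\<forall>t\<ge>0. \<forall>x. ((\<lambda>s. T s f x) has_real_derivative Q (T t f) x) (at t within {0..})))"

definition upper_of :: "(real \<Rightarrow> ('x \<Rightarrow> real) \<Rightarrow> ('x \<Rightarrow> real)) \<Rightarrow> real \<Rightarrow> ('x \<Rightarrow> real) \<Rightarrow> ('x \<Rightarrow> real)" where
  "upper_of T t f = (\<lambda>x. - T t (\<lambda>y. - f y) x)"

end

theory Submission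
  imports Defs
begin


locale lro =
  fixes Q :: "('x::finite \<Rightarrow> real) \<Rightarrow> ('x \<Rightarrow> real)"
  assumes lro: "lower_rate_op Q"
begin

lemma Q_const: "Q (\<lambda>_. \<mu>) = (\<lambda>_. 0)"
  using lro unfolding lower_rate_op_def by blast

lemma Q_add: "Q (\<lambda>y. f y + g y) x \<ge> Q f x + Q g x"
  using lro unfolding lower_rate_op_def by blast

lemma Q_scale: "l \<ge> 0 \<Longrightarrow> Q (\<lambda>y. l * f y) = (\<lambda>y. l * Q f y)"
  using lro unfolding lower_rate_op_def by blast

lemma Q_ind: "x \<noteq> y \<Longrightarrow> Q (indicator {y}) x \<ge> 0"
  using lro unfolding lower_rate_op_def by blast

lemma Q_shift: "Q (\<lambda>y. f y + c) = Q f"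
proof
  fix x
  have "Q (\<lambda>y. f y + c) x \<ge> Q f x + Q (\<lambda>_. c) x" by (rule Q_add)
  hence 1: "Q (\<lambda>y. f y + c) x \<ge> Q f x" by (simp add: Q_const)
  have "Q (\<lambda>y. (f y + c) + (- c)) x \<ge> Q (\<lambda>y. f y + c) x + Q (\<lambda>_. - c) x" by (rule Q_add)
  hence 2: "Q f x \<ge> Q (\<lambda>y. f y + c) x" by (simp add: Q_const)
  from 1 2 show "Q (\<lambda>y. f y + c) x = Q f x" by simp
qed

lemma Q_neg: "Q f x + Q (\<lambda>y. - f y) x \<le> 0"
proof -
  have "Q (\<lambda>y. f y + (- f y)) x \<ge> Q f x + Q (\<lambda>y. - f y) x" by (rule Q_add)
  thus ?thesis by (simp add: Q_const)
qed

lemma Q_sum: "finite S \<Longrightarrow> Q (\<lambda>z. \<Sum>y\<in>S. F y z) x \<ge> (\<Sum>y\<in>S. Q (F y) x)"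
proof (induction S rule: finite_induct)
  case empty
  then show ?case by (simp add: Q_const)
next
  case (insert a S)
  have "Q (\<lambda>z. F a z + (\<Sum>y\<in>S. F y z)) x \<ge> Q (F a) x + Q (\<lambda>z. \<Sum>y\<in>S. F y z) x"
    using Q_add[of "F a"] by simp
  with insert show ?case by simp
qed

lemma Q_nonneg:
  assumes "\<forall>y. h y \<ge> 0" "h x = 0"
  shows "Q h x \<ge> 0"
proof -
  have eq: "h = (\<lambda>z. \<Sum>y\<in>UNIV. h y * indicator {y} z)"
  proof
    fix z
    have "(\<Sum>y\<in>UNIV. h y * indicator {y} z) = (\<Sum>y\<in>{z}. h y * indicator {y} z)"
      by (rule sum.mono_neutral_right) (auto simp: indicator_def)
    thus "h z = (\<Sum>y\<in>UNIV. h y * indicator {y} z)" by simp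
  qed
  have "Q (\<lambda>z. \<Sum>y\<in>UNIV. h y * indicator {y} z) x \<ge> (\<Sum>y\<in>UNIV. Q (\<lambda>z. h y * indicator {y} z) x)"
    by (rule Q_sum) simp
  moreover have "(\<Sum>y\<in>UNIV. Q (\<lambda>z. h y * indicator {y} z) x) \<ge> 0"
  proof (rule sum_nonneg)
    fix y :: 'x
    have "Q (\<lambda>z. h y * indicator {y} z) x = h y * Q (indicator {y}) x"
      using Q_scale[of "h y" "indicator {y}"] assms(1) by simp
    moreover have "h y * Q (indicator {y}) x \<ge> 0"
      using assms Q_ind[of x y] by (cases "x = y") auto
    ultimately show "Q (\<lambda>z. h y * indicator {y} z) x \<ge> 0" by simp
  qed
  ultimately show ?thesis using eq by simp
qed

lemma Q_touch:
  assumes "\<forall>y. f y \<le> g y" "f x = g x"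
  shows "Q f x \<le> Q g x"
proof -
  have "Q (\<lambda>y. f y + (g y - f y)) x \<ge> Q f x + Q (\<lambda>y. g y - f y) x" by (rule Q_add)
  moreover have "Q (\<lambda>y. g y - f y) x \<ge> 0" using assms by (intro Q_nonneg) auto
  ultimately show ?thesis by simp
qed

end

context lro begin

lemma comparison_eps:
  fixes u w du dw :: "real \<Rightarrow> 'x \<Rightarrow> real" and a b \<epsilon> :: real
  assumes du: "\<And>t y. t \<ge> a \<Longrightarrow> ((\<lambda>s. u s y) has_real_derivative du t y) (at t within {a..})"
    and dw: "\<And>t y. t \<ge> a \<Longrightarrow> ((\<lambda>s. w s y) has_real_derivative dw t y) (at t within {a..})"
    and subu: "\<And>t y. t \<ge> a \<Longrightarrow> du t y \<le> Q (u t) y"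
    and supw: "\<And>t y. t \<ge> a \<Longrightarrow> Q (w t) y \<le> dw t y"
    and init: "\<And>y. u a y \<le> w a y"
    and eps: "\<epsilon> > 0"
  shows "\<forall>s\<in>{a..b}. \<forall>y. 0 < w s y + \<epsilon> * (1 + s - a) - u s y"
proof (rule ccontr)
  define \<phi> where "\<phi> y s = w s y + \<epsilon> * (1 + s - a) - u s y" for y s
  have dphi: "((\<phi> y) has_real_derivative (dw s y + \<epsilon> - du s y)) (at s within {a..})"
    if "s \<ge> a" for s y
    unfolding \<phi>_def
    by (rule derivative_eq_intros dw du that refl | simp)+
  have cont: "continuous_on {a..b} (\<phi> y)" for y
    by (rule DERIV_continuous_on, rule DERIV_subset[OF dphi]) auto
  define S where "S = (\<Union>y\<in>UNIV. {s\<in>{a..b}. \<phi> y s \<le> (\<lambda>_. 0) s})"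
  assume "\<not> (\<forall>s\<in>{a..b}. \<forall>y. 0 < w s y + \<epsilon> * (1 + s - a) - u s y)"
  then obtain s y where "s \<in> {a..b}" "\<not> 0 < w s y + \<epsilon> * (1 + s - a) - u s y" by blast
  hence ne: "S \<noteq> {}" unfolding S_def \<phi>_def by (auto simp: not_less)
  have cl: "closed S" unfolding S_def
    by (intro closed_UN ballI continuous_on_closed_Collect_le cont continuous_on_const) auto
  have bdd: "bdd_below S" unfolding S_def by (rule bdd_belowI[of _ a]) auto
  define s0 where "s0 = Inf S"
  have s0S: "s0 \<in> S" unfolding s0_def by (rule closed_contains_Inf[OF ne bdd cl])
  have s0le: "\<And>s. s \<in> S \<Longrightarrow> s0 \<le> s" unfolding s0_def using bdd by (rule cInf_lower[rotated])
  from s0S obtain y where y: "\<phi> y s0 \<le> 0" "a \<le> s0" "s0 \<le> b" unfolding S_def by auto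
  have "\<phi> y a > 0" unfolding \<phi>_def using init[of y] eps by simp
  hence "s0 \<noteq> a" using y by auto
  hence as0: "a < s0" using y by simp
  have atfilt: "at s0 within {a..} = at s0"
    by (rule at_within_interior) (use as0 in simp)
  have before: "\<phi> z s > 0" if "a \<le> s" "s < s0" for z s
  proof (rule ccontr)
    assume "\<not> 0 < \<phi> z s"
    hence "s \<in> S" unfolding S_def using that y by (auto simp: not_less)
    with s0le[of s] that show False by simp
  qed
  have nonneg: "\<phi> z s0 \<ge> 0" for z
  proof -
    have "((\<phi> z) has_real_derivative (dw s0 z + \<epsilon> - du s0 z)) (at s0)"
      using dphi[of s0 z] as0 atfilt by simp
    hence "isCont (\<phi> z) s0" by (rule DERIV_isCont)
    hence "(\<phi> z \<longlongrightarrow> \<phi> z s0) (at_left s0)"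
      by (simp add: isCont_def filterlim_at_split)
    moreover have "eventually (\<lambda>s. 0 \<le> \<phi> z s) (at_left s0)"
      using eventually_at_left_real[OF as0] by eventually_elim (auto intro: less_imp_le before)
    ultimately show ?thesis by (rule tendsto_lowerbound) simp
  qed
  hence y0: "\<phi> y s0 = 0" using y by (metis order.antisym)
  have le: "\<forall>z. u s0 z \<le> w s0 z + \<epsilon> * (1 + s0 - a)" using nonneg unfolding \<phi>_def
    by (auto simp: algebra_simps)
  have eq: "u s0 y = w s0 y + \<epsilon> * (1 + s0 - a)" using y0 unfolding \<phi>_def by simp
  have "Q (u s0) y \<le> Q (\<lambda>z. w s0 z + \<epsilon> * (1 + s0 - a)) y"
    by (rule Q_touch) (use le eq in auto)
  hence "Q (u s0) y \<le> Q (w s0) y" by (simp add: Q_shift)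
  hence pos: "dw s0 y + \<epsilon> - du s0 y > 0"
    using subu[of s0 y] supw[of s0 y] as0 eps by simp
  have "((\<phi> y) has_real_derivative (dw s0 y + \<epsilon> - du s0 y)) (at s0)"
    using dphi[of s0 y] as0 atfilt by simp
  from DERIV_pos_inc_left[OF this pos] obtain d where d: "d > 0"
    "\<And>h. h > 0 \<Longrightarrow> h < d \<Longrightarrow> \<phi> y (s0 - h) < \<phi> y s0" by blast
  define h where "h = min (d/2) ((s0 - a)/2)"
  have h1: "h \<le> (s0 - a)/2" "h \<le> d/2" unfolding h_def by (rule min.cobounded2, rule min.cobounded1)
  have "h > 0" using d as0 unfolding h_def by auto
  moreover have "h < d" using h1 d by linarith
  moreover have "a \<le> s0 - h" using h1(1) as0 by (simp add: field_simps)
  moreover have "s0 - h < s0" using \<open>h > 0\<close> by simp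
  ultimately have "h > 0" "h < d" "a \<le> s0 - h" "s0 - h < s0" by auto
  with d(2)[of h] before[of "s0 - h" y] y0 show False by simp
qed

lemma comparison:
  fixes u w du dw :: "real \<Rightarrow> 'x \<Rightarrow> real" and a t :: real
  assumes du: "\<And>t y. t \<ge> a \<Longrightarrow> ((\<lambda>s. u s y) has_real_derivative du t y) (at t within {a..})"
    and dw: "\<And>t y. t \<ge> a \<Longrightarrow> ((\<lambda>s. w s y) has_real_derivative dw t y) (at t within {a..})"
    and subu: "\<And>t y. t \<ge> a \<Longrightarrow> du t y \<le> Q (u t) y"
    and supw: "\<And>t y. t \<ge> a \<Longrightarrow> Q (w t) y \<le> dw t y"
    and init: "\<And>y. u a y \<le> w a y"
    and t: "a \<le> t"
  shows "u t x \<le> w t x"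
proof (rule field_le_epsilon)
  fix e :: real assume e: "e > 0"
  define \<epsilon> where "\<epsilon> = e / (1 + t - a)"
  have pos: "1 + t - a > 0" using t by simp
  have "\<epsilon> > 0" unfolding \<epsilon>_def using e pos by simp
  from comparison_eps[OF du dw subu supw init this, of t] t
  have "0 < w t x + \<epsilon> * (1 + t - a) - u t x" by auto
  moreover have "\<epsilon> * (1 + t - a) = e" unfolding \<epsilon>_def using pos by simp
  ultimately show "u t x \<le> w t x + e" by simp
qed

end

locale lsg = lro Q for Q :: "('x::finite \<Rightarrow> real) \<Rightarrow> ('x \<Rightarrow> real)" +
  fixes T :: "real \<Rightarrow> ('x \<Rightarrow> real) \<Rightarrow> ('x \<Rightarrow> real)"
  assumes sg: "lower_semigroup_of Q T"
begin

lemma T_deriv: "0 \<le> a \<Longrightarrow> a \<le> t \<Longrightarrow>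
   ((\<lambda>s. T s f y) has_real_derivative Q (T t f) y) (at t within {a..})"
proof -
  assume "0 \<le> a" "a \<le> t"
  hence "((\<lambda>s. T s f y) has_real_derivative Q (T t f) y) (at t within {0..})"
    using sg unfolding lower_semigroup_of_def by auto
  thus ?thesis by (rule DERIV_subset) (use \<open>0 \<le> a\<close> in auto)
qed

lemma T_0: "T 0 f = f"
  using sg unfolding lower_semigroup_of_def by auto

lemma T_below:
  assumes dw: "\<And>t y. t \<ge> a \<Longrightarrow> ((\<lambda>s. w s y) has_real_derivative dw t y) (at t within {a..})"
    and supw: "\<And>t y. t \<ge> a \<Longrightarrow> Q (w t) y \<le> dw t y"
    and init: "\<And>y. T a f y \<le> w a y"
    and "0 \<le> a" "a \<le> t"
  shows "T t f x \<le> w t x"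
  using comparison[where u="\<lambda>s. T s f" and du="\<lambda>s. Q (T s f)", OF T_deriv dw _ supw init] assms
  by auto

lemma T_above:
  assumes du: "\<And>t y. t \<ge> a \<Longrightarrow> ((\<lambda>s. u s y) has_real_derivative du t y) (at t within {a..})"
    and subu: "\<And>t y. t \<ge> a \<Longrightarrow> du t y \<le> Q (u t) y"
    and init: "\<And>y. u a y \<le> T a f y"
    and "0 \<le> a" "a \<le> t"
  shows "u t x \<le> T t f x"
  using comparison[where w="\<lambda>s. T s f" and dw="\<lambda>s. Q (T s f)", OF du T_deriv subu _ init] assms
  by auto

lemma const_lower:
  assumes "\<And>y. \<mu> \<le> f y" "0 \<le> t"
  shows "\<mu> \<le> T t f x"
  using T_above[where u="\<lambda>_ _. \<mu>" and du="\<lambda>_ _. 0" and a=0 and f=f and t=t and x=x] assms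
  by (auto simp: T_0 Q_const)

lemma const_upper:
  assumes "\<And>y. f y \<le> M" "0 \<le> t"
  shows "T t f x \<le> M"
  using T_below[where w="\<lambda>_ _. M" and dw="\<lambda>_ _. 0" and a=0 and f=f and t=t and x=x] assms
  by (auto simp: T_0 Q_const)

lemma LB_exp:
  assumes "0 \<le> a" "a \<le> t" "c \<ge> 0"
    and init: "\<And>y. \<mu> + c * indicator {x} y \<le> T a f y"
  shows "\<mu> + c * exp (Q (indicator {x}) x * (t - a)) \<le> T t f x"
proof -
  define q where "q = Q (indicator {x}) x"
  define u where "u s y = \<mu> + c * exp (q * (s - a)) * indicator {x} y" for s y
  define du where "du s y = c * (q * exp (q * (s - a))) * indicator {x} y" for s y
  have d: "((\<lambda>s. u s y) has_real_derivative du t y) (at t within {a..})" for t y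
    unfolding u_def du_def
    by (rule derivative_eq_intros refl | simp)+
  have Qu: "Q (u s) = (\<lambda>y. (c * exp (q * (s - a))) * Q (indicator {x}) y)" for s
  proof -
    have "u s = (\<lambda>y. (c * exp (q * (s - a))) * indicator {x} y + \<mu>)"
      unfolding u_def by (auto simp: algebra_simps)
    hence "Q (u s) = Q (\<lambda>y. (c * exp (q * (s - a))) * indicator {x} y)" by (simp add: Q_shift)
    also have "\<dots> = (\<lambda>y. (c * exp (q * (s - a))) * Q (indicator {x}) y)"
      by (rule Q_scale) (use assms in simp)
    finally show ?thesis .
  qed
  have sub: "du s y \<le> Q (u s) y" for s y
  proof (cases "y = x")
    case True thus ?thesis unfolding Qu du_def q_def by simp
  next
    case False thus ?thesis unfolding Qu du_def using Q_ind[OF False] assms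
      by (simp add: mult_nonneg_nonneg)
  qed
  have "u t x \<le> T t f x"
    by (rule T_above[where u=u and du=du, OF d sub]) (use init assms in \<open>auto simp: u_def\<close>)
  thus ?thesis unfolding u_def q_def by simp
qed

lemma UB_exp:
  assumes "0 \<le> a" "a \<le> t" "c \<ge> 0"
    and init: "\<And>y. T a f y \<le> \<mu> - c * indicator {x} y"
  shows "T t f x \<le> \<mu> - c * exp (- Q (\<lambda>z. - indicator {x} z) x * (t - a))"
proof -
  define q where "q = Q (\<lambda>z. - indicator {x} z) x"
  define w where "w s y = \<mu> - c * exp (- q * (s - a)) * indicator {x} y" for s y
  define dw where "dw s y = - (c * (- q * exp (- q * (s - a)))) * indicator {x} y" for s y
  have d: "((\<lambda>s. w s y) has_real_derivative dw t y) (at t within {a..})" for t y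
    unfolding w_def dw_def
    by (rule derivative_eq_intros refl | simp)+
  have Qw: "Q (w s) = (\<lambda>y. (c * exp (- q * (s - a))) * Q (\<lambda>z. - indicator {x} z) y)" for s
  proof -
    have e: "w s = (\<lambda>y. (c * exp (- q * (s - a))) * (- indicator {x} y) + \<mu>)"
      unfolding w_def by (auto simp: algebra_simps)
    have "Q (w s) = Q (\<lambda>y. (c * exp (- q * (s - a))) * (- indicator {x} y))"
      by (subst e, rule Q_shift)
    also have "\<dots> = (\<lambda>y. (c * exp (- q * (s - a))) * Q (\<lambda>z. - indicator {x} z) y)"
      by (rule Q_scale) (use assms in simp)
    finally show ?thesis .
  qed
  have sup: "Q (w s) y \<le> dw s y" for s y
  proof (cases "y = x")
    case True thus ?thesis unfolding Qw dw_def q_def by simp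
  next
    case False
    have "Q (\<lambda>z. - indicator {x} z) y \<le> 0"
      using Q_ind[OF False] Q_neg[of "indicator {x}" y] by simp
    hence "(c * exp (- q * (s - a))) * Q (\<lambda>z. - indicator {x} z) y \<le> 0"
      using assms by (simp add: mult_nonneg_nonpos)
    thus ?thesis unfolding Qw dw_def using False by simp
  qed
  have "T t f x \<le> w t x"
    by (rule T_below[where w=w and dw=dw, OF d sup]) (use init assms in \<open>auto simp: w_def\<close>)
  thus ?thesis unfolding w_def q_def by simp
qed

end

context lsg begin

lemma deriv_at: "0 < t \<Longrightarrow> ((\<lambda>s. T s f y) has_real_derivative Q (T t f) y) (at t)"
  using T_deriv[of 0 t f y] at_within_interior[of t "{0..}"] by simp

lemma persist_LB:
  assumes fl: "\<And>y. \<mu> \<le> f y" and fu: "\<And>y. f y \<le> M"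
    and t: "0 < t" "t \<le> s" and nx: "\<not> \<mu> < T t f x"
  shows "\<not> \<mu> < T s f x"
proof -
  define P where "P = {y. \<mu> < T t f y}"
  have QP: "Q (indicator P) z \<le> 0" for z
  proof (cases "z \<in> P")
    case True
    have e: "(indicator P :: 'x \<Rightarrow> real) = (\<lambda>y. (- indicator (-P) y) + 1)"
      by (auto simp: indicator_def)
    have "Q (indicator P) z = Q (\<lambda>y. - indicator (-P) y) z" by (subst e, subst Q_shift) simp
    also have "\<dots> \<le> - Q (indicator (-P)) z" using Q_neg[of "indicator (-P)" z] by simp
    also have "Q (indicator (-P)) z \<ge> 0" by (rule Q_nonneg) (use True in auto)
    hence "- Q (indicator (-P)) z \<le> 0" by simp
    finally show ?thesis .
  next
    case False
    have ge: "\<mu> \<le> T r f y" if "0 \<le> r" for r y by (rule const_lower[OF fl that])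
    have Tz: "T t f z = \<mu>" using False ge[of t z] t unfolding P_def by auto
    have Q0: "Q (T t f) z = 0"
      by (rule DERIV_local_min[OF deriv_at[OF t(1)] t(1)]) (use Tz ge in auto)
    define c where "c = Min (insert 1 ((\<lambda>y. T t f y - \<mu>) ` P))"
    have c0: "c > 0" unfolding c_def by (subst Min_gr_iff) (auto simp: P_def)
    have cle: "c \<le> T t f y - \<mu>" if "y \<in> P" for y
      unfolding c_def by (rule Min_le) (use that in auto)
    have bnd: "\<forall>y. \<mu> + c * indicator P y \<le> T t f y"
    proof
      fix y show "\<mu> + c * indicator P y \<le> T t f y"
        using cle[of y] ge[of t y] t by (cases "y \<in> P") (auto simp: indicator_def)
    qed
    have "Q (\<lambda>y. \<mu> + c * indicator P y) z \<le> Q (T t f) z"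
      by (rule Q_touch[OF bnd]) (use False Tz in simp)
    moreover have "Q (\<lambda>y. \<mu> + c * indicator P y) = (\<lambda>y. c * Q (indicator P) y)"
    proof -
      have e: "(\<lambda>y. \<mu> + c * indicator P y) = (\<lambda>y. c * indicator P y + \<mu>)" by (auto simp: algebra_simps)
      show ?thesis by (subst e, subst Q_shift, rule Q_scale) (use c0 in simp)
    qed
    ultimately have "c * Q (indicator P) z \<le> 0" using Q0 by simp
    thus ?thesis using c0 by (simp add: mult_le_0_iff)
  qed
  define K where "K = M - \<mu>"
  have K0: "K \<ge> 0" using fl[of x] fu[of x] unfolding K_def by simp
  have "T s f x \<le> \<mu> + K * indicator P x"
  proof (rule T_below[where w="\<lambda>_ y. \<mu> + K * indicator P y" and dw="\<lambda>_ _. 0" and a=t])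
    fix r y
    show "((\<lambda>s. \<mu> + K * indicator P y) has_real_derivative 0) (at r within {t..})" by simp
    have "Q (\<lambda>y. \<mu> + K * indicator P y) = (\<lambda>y. K * Q (indicator P) y)"
    proof -
      have e: "(\<lambda>y. \<mu> + K * indicator P y) = (\<lambda>y. K * indicator P y + \<mu>)" by (auto simp: algebra_simps)
      show ?thesis by (subst e, subst Q_shift, rule Q_scale) (use K0 in simp)
    qed
    thus "Q (\<lambda>y. \<mu> + K * indicator P y) y \<le> 0" using QP[of y] K0 by (simp add: mult_nonneg_nonpos)
  next
    fix y
    show "T t f y \<le> \<mu> + K * indicator P y"
      using const_upper[OF fu, where t=t and x=y] t unfolding K_def P_def by (auto simp: indicator_def)
  qed (use t in auto)
  moreover have "x \<notin> P" using nx unfolding P_def by simp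
  ultimately show ?thesis by simp
qed

lemma persist_UB:
  assumes fl: "\<And>y. m \<le> f y" and fu: "\<And>y. f y \<le> \<mu>"
    and t: "0 < t" "t \<le> s" and nx: "\<not> T t f x < \<mu>"
  shows "\<not> T s f x < \<mu>"
proof -
  define P where "P = {y. T t f y < \<mu>}"
  have QP: "Q (\<lambda>y. - indicator P y) z \<ge> 0" for z
  proof (cases "z \<in> P")
    case True
    have e: "(\<lambda>y. - indicator P y :: real) = (\<lambda>y. indicator (-P) y + (-1))"
      by (auto simp: indicator_def)
    have "Q (\<lambda>y. - indicator P y) z = Q (indicator (-P)) z" by (subst e, subst Q_shift) simp
    also have "Q (indicator (-P)) z \<ge> 0" by (rule Q_nonneg) (use True in auto)
    finally show ?thesis by simp
  next
    case False
    have le: "T r f y \<le> \<mu>" if "0 \<le> r" for r y by (rule const_upper[OF fu that])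
    have Tz: "T t f z = \<mu>" using False le[of t z] t unfolding P_def by auto
    have Q0: "Q (T t f) z = 0"
      by (rule DERIV_local_max[OF deriv_at[OF t(1)] t(1)]) (use Tz le in auto)
    define c where "c = Min (insert 1 ((\<lambda>y. \<mu> - T t f y) ` P))"
    have c0: "c > 0" unfolding c_def by (subst Min_gr_iff) (auto simp: P_def)
    have cle: "c \<le> \<mu> - T t f y" if "y \<in> P" for y
      unfolding c_def by (rule Min_le) (use that in auto)
    have bnd: "\<forall>y. T t f y \<le> \<mu> - c * indicator P y"
    proof
      fix y show "T t f y \<le> \<mu> - c * indicator P y"
        using cle[of y] le[of t y] t by (cases "y \<in> P") (auto simp: indicator_def)
    qed
    have "Q (T t f) z \<le> Q (\<lambda>y. \<mu> - c * indicator P y) z"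
      by (rule Q_touch[OF bnd]) (use False Tz in simp)
    moreover have "Q (\<lambda>y. \<mu> - c * indicator P y) = (\<lambda>y. c * Q (\<lambda>y. - indicator P y) y)"
    proof -
      have e: "(\<lambda>y. \<mu> - c * indicator P y) = (\<lambda>y. c * (- indicator P y) + \<mu>)" by (auto simp: algebra_simps)
      show ?thesis by (subst e, subst Q_shift, rule Q_scale) (use c0 in simp)
    qed
    ultimately have "c * Q (\<lambda>y. - indicator P y) z \<ge> 0" using Q0 by simp
    thus ?thesis using c0 by (simp add: zero_le_mult_iff)
  qed
  define K where "K = \<mu> - m"
  have K0: "K \<ge> 0" using fl[of x] fu[of x] unfolding K_def by simp
  have "\<mu> - K * indicator P x \<le> T s f x"
  proof (rule T_above[where u="\<lambda>_ y. \<mu> - K * indicator P y" and du="\<lambda>_ _. 0" and a=t])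
    fix r y
    show "((\<lambda>s. \<mu> - K * indicator P y) has_real_derivative 0) (at r within {t..})" by simp
    have "Q (\<lambda>y. \<mu> - K * indicator P y) = (\<lambda>y. K * Q (\<lambda>y. - indicator P y) y)"
    proof -
      have e: "(\<lambda>y. \<mu> - K * indicator P y) = (\<lambda>y. K * (- indicator P y) + \<mu>)" by (auto simp: algebra_simps)
      show ?thesis by (subst e, subst Q_shift, rule Q_scale) (use K0 in simp)
    qed
    thus "0 \<le> Q (\<lambda>y. \<mu> - K * indicator P y) y" using QP[of y] K0 by simp
  next
    fix y
    show "\<mu> - K * indicator P y \<le> T t f y"
      using const_lower[OF fl, where t=t and x=y] t unfolding K_def P_def by (auto simp: indicator_def)
  qed (use t in auto)
  moreover have "x \<notin> P" using nx unfolding P_def by simp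
  ultimately show ?thesis by simp
qed

lemma mono_LB:
  assumes fl: "\<And>y. \<mu> \<le> f y" and a: "0 \<le> a" "a \<le> s" and px: "\<mu> < T a f x"
  shows "\<mu> < T s f x"
proof -
  define c where "c = T a f x - \<mu>"
  have c0: "c > 0" using px unfolding c_def by simp
  have "\<mu> + c * exp (Q (indicator {x}) x * (s - a)) \<le> T s f x"
  proof (rule LB_exp[OF a])
    show "0 \<le> c" using c0 by simp
    fix y show "\<mu> + c * indicator {x} y \<le> T a f y"
      using const_lower[OF fl a(1), where x=y] unfolding c_def by (auto simp: indicator_def)
  qed
  moreover have "c * exp (Q (indicator {x}) x * (s - a)) > 0" using c0 by simp
  ultimately show ?thesis by simp
qed

lemma mono_UB:
  assumes fu: "\<And>y. f y \<le> \<mu>" and a: "0 \<le> a" "a \<le> s" and px: "T a f x < \<mu>"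
  shows "T s f x < \<mu>"
proof -
  define c where "c = \<mu> - T a f x"
  have c0: "c > 0" using px unfolding c_def by simp
  have "T s f x \<le> \<mu> - c * exp (- Q (\<lambda>z. - indicator {x} z) x * (s - a))"
  proof (rule UB_exp[OF a])
    show "0 \<le> c" using c0 by simp
    fix y show "T a f y \<le> \<mu> - c * indicator {x} y"
      using const_upper[OF fu a(1), where x=y] unfolding c_def by (auto simp: indicator_def)
  qed
  moreover have "c * exp (- Q (\<lambda>z. - indicator {x} z) x * (s - a)) > 0" using c0 by simp
  ultimately show ?thesis by simp
qed

lemma equiv_LB:
  assumes fl: "\<And>y. \<mu> \<le> f y" and fu: "\<And>y. f y \<le> M" and "0 < t" "0 < s"
  shows "\<mu> < T t f x \<longleftrightarrow> \<mu> < T s f x"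
proof (cases "t \<le> s")
  case True
  thus ?thesis using mono_LB[where \<mu>=\<mu> and f=f and a=t and s=s and x=x] persist_LB[where \<mu>=\<mu> and M=M and f=f and t=t and s=s and x=x] fl fu assms by auto
next
  case False
  thus ?thesis using mono_LB[where \<mu>=\<mu> and f=f and a=s and s=t and x=x] persist_LB[where \<mu>=\<mu> and M=M and f=f and t=s and s=t and x=x] fl fu assms by auto
qed

lemma equiv_UB:
  assumes fl: "\<And>y. m \<le> f y" and fu: "\<And>y. f y \<le> \<mu>" and "0 < t" "0 < s"
  shows "T t f x < \<mu> \<longleftrightarrow> T s f x < \<mu>"
proof (cases "t \<le> s")
  case True
  thus ?thesis using mono_UB[where \<mu>=\<mu> and f=f and a=t and s=s and x=x] persist_UB[where \<mu>=\<mu> and m=m and f=f and t=t and s=s and x=x] fl fu assms by auto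
next
  case False
  thus ?thesis using mono_UB[where \<mu>=\<mu> and f=f and a=s and s=t and x=x] persist_UB[where \<mu>=\<mu> and m=m and f=f and t=s and s=t and x=x] fl fu assms by auto
qed

lemma base_LB:
  assumes "\<And>y. \<mu> + indicator {x} y \<le> f y" "0 \<le> t"
  shows "\<mu> < T t f x"
proof -
  have "\<mu> + 1 * exp (Q (indicator {x}) x * (t - 0)) \<le> T t f x"
    by (rule LB_exp) (use assms in \<open>auto simp: T_0\<close>)
  moreover have "exp (Q (indicator {x}) x * (t - 0)) > 0" by simp
  ultimately show ?thesis by linarith
qed

lemma base_UB:
  assumes "\<And>y. f y \<le> \<mu> - indicator {x} y" "0 \<le> t"
  shows "T t f x < \<mu>"
proof -
  have "T t f x \<le> \<mu> - 1 * exp (- Q (\<lambda>z. - indicator {x} z) x * (t - 0))"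
    by (rule UB_exp) (use assms in \<open>auto simp: T_0\<close>)
  moreover have "exp (- Q (\<lambda>z. - indicator {x} z) x * (t - 0)) > 0" by simp
  ultimately show ?thesis by linarith
qed

end
theorem corollary3:
  fixes Q :: "('x::finite \<Rightarrow> real) \<Rightarrow> ('x \<Rightarrow> real)"
    and T :: "real \<Rightarrow> ('x \<Rightarrow> real) \<Rightarrow> ('x \<Rightarrow> real)"
    and A :: "'x set" and x :: 'x and t s :: real
  assumes "lower_rate_op Q"
    and "lower_semigroup_of Q T"
    and "t > 0" and "s > 0"
  shows "((x \<in> A \<longrightarrow> T t (indicator A) x > 0) \<and>
           (T t (indicator A) x > 0 \<longleftrightarrow> T s (indicator A) x > 0)) \<and>
         ((x \<notin> A \<longrightarrow> T t (indicator A) x < 1) \<and>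
           (T t (indicator A) x < 1 \<longleftrightarrow> T s (indicator A) x < 1)) \<and>
         ((x \<in> A \<longrightarrow> upper_of T t (indicator A) x > 0) \<and>
           (upper_of T t (indicator A) x > 0 \<longleftrightarrow> upper_of T s (indicator A) x > 0)) \<and>
         ((x \<notin> A \<longrightarrow> upper_of T t (indicator A) x < 1) \<and>
           (upper_of T t (indicator A) x < 1 \<longleftrightarrow> upper_of T s (indicator A) x < 1))"
proof -
  interpret lsg Q T using assms(1,2) by (simp add: lsg_def lro_def lsg_axioms_def)
  have t: "0 \<le> t" using assms by simp
  have i0: "\<And>y. (0::real) \<le> indicator A y" and i1: "\<And>y. indicator A y \<le> (1::real)"
    by (auto simp: indicator_def)
  have n0: "\<And>y. - (indicator A y) \<le> (0::real)" and n1: "\<And>y. (-1::real) \<le> - indicator A y"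
    by (auto simp: indicator_def)
  have up: "\<And>r. upper_of T r (indicator A) x = - T r (\<lambda>y. - indicator A y) x"
    by (simp add: upper_of_def)
  have p1: "x \<in> A \<longrightarrow> T t (indicator A) x > 0"
  proof
    assume "x \<in> A"
    thus "T t (indicator A) x > 0"
      using base_LB[where \<mu>=0 and f="indicator A" and x=x and t=t] t
      by (auto simp: indicator_def)
  qed
  have p2: "x \<notin> A \<longrightarrow> T t (indicator A) x < 1"
  proof
    assume "x \<notin> A"
    thus "T t (indicator A) x < 1"
      using base_UB[where \<mu>=1 and f="indicator A" and x=x and t=t] t
      by (auto simp: indicator_def)
  qed
  have p3: "x \<in> A \<longrightarrow> T t (\<lambda>y. - indicator A y) x < 0"
  proof
    assume "x \<in> A"
    thus "T t (\<lambda>y. - indicator A y) x < 0"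
      using base_UB[where \<mu>=0 and f="\<lambda>y. - indicator A y" and x=x and t=t] t
      by (auto simp: indicator_def)
  qed
  have p4: "x \<notin> A \<longrightarrow> T t (\<lambda>y. - indicator A y) x > -1"
  proof
    assume "x \<notin> A"
    thus "T t (\<lambda>y. - indicator A y) x > -1"
      using base_LB[where \<mu>="-1" and f="\<lambda>y. - indicator A y" and x=x and t=t] t
      by (auto simp: indicator_def)
  qed
  have e1: "T t (indicator A) x > 0 \<longleftrightarrow> T s (indicator A) x > 0"
    using equiv_LB[where \<mu>=0 and M=1 and f="indicator A", OF i0 i1 assms(3,4)] by simp
  have e2: "T t (indicator A) x < 1 \<longleftrightarrow> T s (indicator A) x < 1"
    using equiv_UB[where \<mu>=1 and m=0 and f="indicator A", OF i0 i1 assms(3,4)] by simp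
  have e3: "T t (\<lambda>y. - indicator A y) x < 0 \<longleftrightarrow> T s (\<lambda>y. - indicator A y) x < 0"
    using equiv_UB[where \<mu>=0 and m="-1" and f="\<lambda>y. - indicator A y", OF n1 n0 assms(3,4)] by simp
  have e4: "T t (\<lambda>y. - indicator A y) x > -1 \<longleftrightarrow> T s (\<lambda>y. - indicator A y) x > -1"
    using equiv_LB[where \<mu>="-1" and M=0 and f="\<lambda>y. - indicator A y", OF n1 n0 assms(3,4)] by simp
  show ?thesis unfolding up using p1 p2 p3 p4 e1 e2 e3 e4 by auto
qed

end
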